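(* Let $a_1,\dots,a_n\in S^d$. Algorithm 2.9 (described in the context) solves the spherical feasibility problem. That is, it terminates either in step 2 with a point $x^k/\|x^k\|$ satisfying $a_i^Tx^k\ge0$ for all $i$, or in step 3 with a positively spanning subset of $\{a_1,\dots,a_n\}$. Moreover, whenever $Q_{k+1}$ is produced from $Q_k$, $$\mathrm{def}\,Q_{k+1}\le\sqrt{\frac{1-v^2}{1+(\mathrm{def}\,Q_k)^2+2\,\mathrm{def}\,Q_k\,v}}\;\mathrm{def}\,Q_k,\qquad v=v(x^k/\|x^k\|).$$
   Context: $S^d$ is the unit sphere in $\mathbb{R}^{d+1}$ and $O$ is the origin. For $x\in S^d$, the violation is $v(x)=\max\{0,\max_i(-a_i^Tx)\}$. An index $m$ is a most violated constraint for $x$ if $a_m^Tx=\min_j a_j^Tx$. A finite set $Q$ is positively spanning if it is affinely independent and $O\in\mathrm{conv}\,Q$. It is nearly positively spanning if it is affinely independent and the orthogonal projection $O'$ of $O$ onto $\mathrm{aff}\,Q$ lies in $\mathrm{conv}\,Q$; then $\mathrm{def}\,Q=\|O'\|$. The touching sphere of an affinely independent $Q$ is the unique sphere $\{z:\|z-C\|=R\}$ with $C\in\mathrm{aff}\,Q$ containing $Q$. Algorithm 2.9: (1) Choose any $j$ and set $k=1$, $x^1=a_j$, $Q_1=\{a_j\}$. (2) If $x^k/\|x^k\|$ is feasible, stop. Otherwise let $m$ be the index of a most violated constraint for $x^k/\|x^k\|$, and let $y$ be the point on the line through $x^k$ and $a_m$ closest to the origin. (3) If $Q_k\cup\{a_m\}$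 is positively spanning, stop. (4) Compute the center $C$ of the touching sphere of $Q_k\cup\{a_m\}$. (5) If $C\in\mathrm{conv}(Q_k\cup\{a_m\})$, set $x^{k+1}=C$, $Q_{k+1}=Q_k\cup\{a_m\}$ and $k:=k+1$, then go to (2). (6) Otherwise, let $y$ be the point where the segment $\overline{yC}$ meets the relative boundary of $\mathrm{conv}(Q_k\cup\{a_m\})$. Let $F$ be a facet containing $y$, and let $a_j$ be the vertex of $Q_k$ not in $F$. Set $Q_k:=Q_k\setminus\{a_j\}$ and go to (4). *)

theory Defs
  imports "HOL-Analysis.Analysis"
begin

text \<open>Constraints are given by a :: nat => 'a with indices i < n
  (the paper's a_1,...,a_n). The ambient space 'a plays the role of R^(d+1).\<close>

definition feasible_pt :: "(nat \<Rightarrow> 'a::euclidean_space) \<Rightarrow> nat \<Rightarrow> 'a \<Rightarrow> bool" where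
  "feasible_pt a n z \<longleftrightarrow> (\<forall>i<n. 0 \<le> a i \<bullet> z)"

definition violation :: "(nat \<Rightarrow> 'a::euclidean_space) \<Rightarrow> nat \<Rightarrow> 'a \<Rightarrow> real" where
  "violation a n z = max 0 (Max ((\<lambda>i. - (a i \<bullet> z)) ` {..<n}))"

definition most_violated :: "(nat \<Rightarrow> 'a::euclidean_space) \<Rightarrow> nat \<Rightarrow> 'a \<Rightarrow> nat \<Rightarrow> bool" where
  "most_violated a n z m \<longleftrightarrow> m < n \<and> a m \<bullet> z = Min ((\<lambda>j. a j \<bullet> z) ` {..<n})"

definition pos_spanning :: "'a::euclidean_space set \<Rightarrow> bool" where
  "pos_spanning Q \<longleftrightarrow> finite Q \<and> \<not> affine_dependent Q \<and> 0 \<in> convex hull Q"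

definition proj_origin :: "'a::euclidean_space set \<Rightarrow> 'a" where
  "proj_origin Q = closest_point (affine hull Q) 0"

definition nearly_pos_spanning :: "'a::euclidean_space set \<Rightarrow> bool" where
  "nearly_pos_spanning Q \<longleftrightarrow> finite Q \<and> \<not> affine_dependent Q \<and> proj_origin Q \<in> convex hull Q"

definition defect :: "'a::euclidean_space set \<Rightarrow> real" where
  "defect Q = norm (proj_origin Q)"

definition touching_center :: "'a::euclidean_space set \<Rightarrow> 'a" where
  "touching_center Q = (THE C. C \<in> affine hull Q \<and> (\<exists>R. \<forall>q\<in>Q. dist q C = R))"

text \<open>States of Algorithm 2.9.
  At2 x Q: at step (2) with current x^k = x and Q_k = Q.
  At4 x Q P am y: in the loop of steps (4)-(6) of the iteration started at At2 x Q,
    with current (possibly reduced) set P, chosen constraint am and current point y.\<close>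
datatype 'a alg_state =
    At2 'a "'a set"
  | At4 'a "'a set" "'a set" 'a 'a
  | StopFeasible 'a
  | StopSpanning "'a set"

inductive alg_step :: "(nat \<Rightarrow> 'a::euclidean_space) \<Rightarrow> nat \<Rightarrow> 'a alg_state \<Rightarrow> 'a alg_state \<Rightarrow> bool"
  for a :: "nat \<Rightarrow> 'a" and n :: nat where
  step2_stop:
    "feasible_pt a n (x /\<^sub>R norm x) \<Longrightarrow>
     alg_step a n (At2 x Q) (StopFeasible (x /\<^sub>R norm x))"
| step3_stop:
    "\<not> feasible_pt a n (x /\<^sub>R norm x) \<Longrightarrow> most_violated a n (x /\<^sub>R norm x) m \<Longrightarrow>
     pos_spanning (insert (a m) Q) \<Longrightarrow>
     alg_step a n (At2 x Q) (StopSpanning (insert (a m) Q))"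
| step3_continue:
    "\<not> feasible_pt a n (x /\<^sub>R norm x) \<Longrightarrow> most_violated a n (x /\<^sub>R norm x) m \<Longrightarrow>
     \<not> pos_spanning (insert (a m) Q) \<Longrightarrow>
     y = closest_point (affine hull {x, a m}) 0 \<Longrightarrow>
     alg_step a n (At2 x Q) (At4 x Q Q (a m) y)"
| step5:
    "finite P \<Longrightarrow> \<not> affine_dependent (insert am P) \<Longrightarrow>
     C = touching_center (insert am P) \<Longrightarrow> C \<in> convex hull (insert am P) \<Longrightarrow>
     alg_step a n (At4 x Q P am y) (At2 C (insert am P))"
| step6:
    "finite P \<Longrightarrow> \<not> affine_dependent (insert am P) \<Longrightarrow>
     C = touching_center (insert am P) \<Longrightarrow> C \<notin> convex hull (insert am P) \<Longrightarrow>
     y' \<in> closed_segment y C \<Longrightarrow> y' \<in> rel_frontier (convex hull (insert am P)) \<Longrightarrow>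
     F facet_of (convex hull (insert am P)) \<Longrightarrow> y' \<in> F \<Longrightarrow>
     aj \<in> P \<Longrightarrow> aj \<notin> F \<Longrightarrow>
     alg_step a n (At4 x Q P am y) (At4 x Q (P - {aj}) am y')"

definition alg_init :: "(nat \<Rightarrow> 'a::euclidean_space) \<Rightarrow> nat \<Rightarrow> 'a alg_state \<Rightarrow> bool" where
  "alg_init a n s \<longleftrightarrow> (\<exists>j<n. s = At2 (a j) {a j})"

definition alg_reachable :: "(nat \<Rightarrow> 'a::euclidean_space) \<Rightarrow> nat \<Rightarrow> 'a alg_state \<Rightarrow> bool" where
  "alg_reachable a n s \<longleftrightarrow> (\<exists>s0. alg_init a n s0 \<and> (alg_step a n)\<^sup>*\<^sup>* s0 s)"

end

theory Submission
  imports Defs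
begin

lemma cp_props:
  fixes S :: "'a::euclidean_space set"
  assumes "S \<noteq> {}"
  shows "closest_point (affine hull S) 0 \<in> affine hull S"
    and "\<And>z. z \<in> affine hull S \<Longrightarrow> z \<bullet> closest_point (affine hull S) 0
            = closest_point (affine hull S) 0 \<bullet> closest_point (affine hull S) 0"
    and "\<And>z. z \<in> affine hull S \<Longrightarrow> norm (closest_point (affine hull S) 0) \<le> norm z"
proof -
  let ?p = "closest_point (affine hull S) 0"
  have ne: "affine hull S \<noteq> {}" using assms by simp
  show pin: "?p \<in> affine hull S" by (rule closest_point_in_set[OF closed_affine_hull ne])
  show "norm ?p \<le> norm z" if "z \<in> affine hull S" for z
    using closest_point_le[OF closed_affine_hull that, of 0] by (simp add: dist_norm)
  show "z \<bullet> ?p = ?p \<bullet> ?p" if z: "z \<in> affine hull S" for z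
  proof -
    have 1: "(0 - ?p) \<bullet> (z - ?p) \<le> 0"
      by (rule closest_point_dot[OF convex_affine_hull closed_affine_hull z])
    have z2: "2 *\<^sub>R ?p + (-1) *\<^sub>R z \<in> affine hull S"
      using mem_affine[OF affine_affine_hull pin z, of 2 "-1"] by simp
    have 2: "(0 - ?p) \<bullet> ((2 *\<^sub>R ?p + (-1) *\<^sub>R z) - ?p) \<le> 0"
      by (rule closest_point_dot[OF convex_affine_hull closed_affine_hull z2])
    have "(2 *\<^sub>R ?p + (-1) *\<^sub>R z) - ?p = ?p - z" by (simp add: algebra_simps scaleR_2)
    with 1 2 show ?thesis by (simp add: inner_diff_right inner_commute)
  qed
qed

lemma touching_eq:
  fixes S :: "'a::euclidean_space set"
  assumes "finite S" "S \<noteq> {}" "\<forall>q\<in>S. norm q = 1"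
  shows "touching_center S = closest_point (affine hull S) 0"
proof -
  let ?p = "closest_point (affine hull S) 0"
  note P = cp_props[OF assms(2)]
  have hS: "q \<in> affine hull S" if "q \<in> S" for q using that by (simp add: hull_inc)
  have d: "dist q ?p = sqrt (1 - ?p \<bullet> ?p)" if "q \<in> S" for q
  proof -
    have "(dist q ?p)\<^sup>2 = (q - ?p) \<bullet> (q - ?p)" by (simp add: dist_norm power2_norm_eq_inner)
    also have "\<dots> = q \<bullet> q - 2 * (q \<bullet> ?p) + ?p \<bullet> ?p" by (simp add: algebra_simps inner_commute)
    also have "q \<bullet> q = 1" using assms(3) that by (metis norm_eq_1)
    also have "q \<bullet> ?p = ?p \<bullet> ?p" using P(2)[OF hS[OF that]] .
    finally have "(dist q ?p)\<^sup>2 = 1 - ?p \<bullet> ?p" by simp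
    then show ?thesis by (metis zero_le_dist real_sqrt_unique)
  qed
  show ?thesis
    unfolding touching_center_def
  proof (rule the_equality)
    show "?p \<in> affine hull S \<and> (\<exists>R. \<forall>q\<in>S. dist q ?p = R)" using P(1) d by blast
  next
    fix C assume C: "C \<in> affine hull S \<and> (\<exists>R. \<forall>q\<in>S. dist q C = R)"
    then obtain R where R: "\<forall>q\<in>S. dist q C = R" by blast
    define c where "c = (1 + C \<bullet> C - R\<^sup>2) / 2"
    have qc: "q \<bullet> C = c" if "q \<in> S" for q
    proof -
      have "R\<^sup>2 = (q - C) \<bullet> (q - C)" using R that by (metis dist_norm power2_norm_eq_inner)
      also have "\<dots> = q \<bullet> q - 2 * (q \<bullet> C) + C \<bullet> C" by (simp add: algebra_simps inner_commute)
      also have "q \<bullet> q = 1" using assms(3) that by (metis norm_eq_1)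
      finally show ?thesis unfolding c_def by simp
    qed
    have zc: "z \<bullet> C = c" if zS: "z \<in> affine hull S" for z
    proof -
      obtain u where u: "sum u S = 1" "(\<Sum>v\<in>S. u v *\<^sub>R v) = z"
        using zS affine_hull_finite[OF assms(1)] by auto
      have "z \<bullet> C = (\<Sum>v\<in>S. u v * (v \<bullet> C))" unfolding u(2)[symmetric]
        by (simp add: inner_sum_left)
      also have "\<dots> = (\<Sum>v\<in>S. u v * c)" by (rule sum.cong) (auto simp: qc)
      also have "\<dots> = c" using u(1) by (simp add: sum_distrib_right[symmetric])
      finally show ?thesis .
    qed
    have "C \<bullet> C = c" using zc C by blast
    moreover have "?p \<bullet> C = c" using zc P(1) by blast
    moreover have "C \<bullet> ?p = ?p \<bullet> ?p" using P(2) C by blast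
    ultimately have "(C - ?p) \<bullet> (C - ?p) = 0" by (simp add: algebra_simps inner_commute)
    then show "C = ?p" by simp
  qed
qed

lemma aux_alg:
  fixes N D al :: real
  assumes "N > 0" "N = 1 - 2 * al + D"
  shows "D + (D - al) / N * (al - D) = (D - al\<^sup>2) / N"
proof -
  have "D * N + (D - al) * (al - D) = D - al\<^sup>2" unfolding assms(2) by (simp add: algebra_simps power2_eq_square)
  then show ?thesis using assms(1) by (simp add: field_simps)
qed

lemma line_cp:
  fixes x am :: "'a::euclidean_space"
  assumes am: "norm am = 1" and neg: "am \<bullet> x < 0"
  shows "closest_point (affine hull {x, am}) 0 \<in> closed_segment x am"
    and "(norm (closest_point (affine hull {x, am}) 0))\<^sup>2
          = (x \<bullet> x - (x \<bullet> am)\<^sup>2) / (1 - 2 * (x \<bullet> am) + x \<bullet> x)"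
proof -
  define N where "N = 1 - 2 * (x \<bullet> am) + x \<bullet> x"
  have aa: "am \<bullet> am = 1" using am by (metis norm_eq_1)
  have xx: "x \<bullet> x \<ge> 0" by simp
  have Npos: "N > 0" using neg xx unfolding N_def by (simp only: inner_commute[of x am])
  have NN: "(am - x) \<bullet> (am - x) = N"
    by (simp only: inner_diff_left inner_diff_right inner_commute[of am x] aa N_def)
  define t where "t = (x \<bullet> x - x \<bullet> am) / N"
  define y where "y = x + t *\<^sub>R (am - x)"
  have "y \<bullet> (am - x) = x \<bullet> (am - x) + t * N"
    unfolding y_def by (simp only: inner_add_left inner_scaleR_left NN)
  also have "t * N = x \<bullet> x - x \<bullet> am" using Npos unfolding t_def by simp
  finally have orth: "y \<bullet> (am - x) = 0" by (simp add: inner_diff_right)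
  have yin: "y \<in> affine hull {x, am}"
  proof -
    have "y = (1 - t) *\<^sub>R x + t *\<^sub>R am" unfolding y_def by (simp add: scaleR_diff_right scaleR_diff_left)
    then show ?thesis unfolding affine_hull_2 by force
  qed
  have yeq: "y = closest_point (affine hull {x, am}) 0"
  proof (rule closest_point_unique[OF convex_affine_hull closed_affine_hull yin], intro ballI)
    fix z assume "z \<in> affine hull {x, am}"
    then obtain u v where uv: "u + v = 1" "z = u *\<^sub>R x + v *\<^sub>R am" unfolding affine_hull_2 by auto
    have u: "u = 1 - v" using uv by simp
    have zy: "z = y + (v - t) *\<^sub>R (am - x)" unfolding y_def uv(2) u
      by (simp add: scaleR_diff_right scaleR_diff_left)
    have "(norm z)\<^sup>2 = (norm y)\<^sup>2 + (norm ((v - t) *\<^sub>R (am - x)))\<^sup>2"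
      unfolding zy by (rule norm_add_Pythagorean) (simp add: orthogonal_def orth)
    then have "(norm y)\<^sup>2 \<le> (norm z)\<^sup>2" by simp
    then have "norm y \<le> norm z" by (rule power2_le_imp_le) simp
    then show "dist 0 y \<le> dist 0 z" by (simp add: dist_norm norm_le)
  qed
  have ax: "am \<bullet> x = x \<bullet> am" by (simp add: inner_commute)
  have aneg: "x \<bullet> am < 0" using neg ax by simp
  have yseg: "y \<in> closed_segment x am"
  proof -
    have "x \<bullet> x - x \<bullet> am \<ge> 0" using aneg xx by linarith
    then have "t \<ge> 0" using Npos by (simp add: t_def)
    have "x \<bullet> x - x \<bullet> am \<le> N" using aneg unfolding N_def by linarith
    then have "t \<le> 1" using Npos by (simp add: t_def)
    have "y = (1 - t) *\<^sub>R x + t *\<^sub>R am" unfolding y_def by (simp add: algebra_simps)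
    then show ?thesis unfolding in_segment using \<open>t \<ge> 0\<close> \<open>t \<le> 1\<close> by blast
  qed
  have ny: "(norm y)\<^sup>2 = (x \<bullet> x - (x \<bullet> am)\<^sup>2) / N"
  proof -
    have "(norm y)\<^sup>2 = y \<bullet> y" by (simp add: power2_norm_eq_inner)
    also have "y \<bullet> y = y \<bullet> x + t * (y \<bullet> (am - x))" by (subst (2) y_def) (simp add: inner_add_right)
    also have "\<dots> = y \<bullet> x" using orth by simp
    also have "\<dots> = x \<bullet> x + t * (x \<bullet> am - x \<bullet> x)" unfolding y_def
      by (simp add: inner_add_left inner_diff_left ax)
    also have "\<dots> = (x \<bullet> x - (x \<bullet> am)\<^sup>2) / N"
      unfolding t_def by (rule aux_alg[OF Npos N_def])
    finally show ?thesis .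
  qed
  show "closest_point (affine hull {x, am}) 0 \<in> closed_segment x am"
    "(norm (closest_point (affine hull {x, am}) 0))\<^sup>2
          = (x \<bullet> x - (x \<bullet> am)\<^sup>2) / (1 - 2 * (x \<bullet> am) + x \<bullet> x)"
    using yeq yseg ny by (simp_all add: N_def)
qed


lemma viol:
  fixes a :: "nat \<Rightarrow> 'a::euclidean_space"
  assumes unit: "\<forall>i<n. norm (a i) = 1" and xne: "x \<noteq> 0"
    and nf: "\<not> feasible_pt a n (x /\<^sub>R norm x)" and mv: "most_violated a n (x /\<^sub>R norm x) m"
  shows "a m \<bullet> x < 0" "violation a n (x /\<^sub>R norm x) = - (a m \<bullet> x) / norm x"
    "- (a m \<bullet> x) \<le> norm x" "m < n"
proof -
  let ?z = "x /\<^sub>R norm x"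
  have nx: "norm x > 0" using xne by simp
  obtain i where i: "i < n" "a i \<bullet> ?z < 0" using nf unfolding feasible_pt_def by force
  have m: "m < n" "a m \<bullet> ?z = Min ((\<lambda>j. a j \<bullet> ?z) ` {..<n})" using mv unfolding most_violated_def by auto
  show "m < n" using m by simp
  have le: "a m \<bullet> ?z \<le> a j \<bullet> ?z" if "j < n" for j
    unfolding m(2) by (rule Min_le) (use that in auto)
  have mz: "a m \<bullet> ?z = (a m \<bullet> x) / norm x" by (simp add: divide_inverse_commute)
  have "a m \<bullet> ?z < 0" using le[OF i(1)] i(2) by simp
  then show neg: "a m \<bullet> x < 0" using nx mz by (simp add: divide_less_0_iff)
  have "Max ((\<lambda>i. - (a i \<bullet> ?z)) ` {..<n}) = - (a m \<bullet> ?z)"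
    by (rule Max_eqI) (use le m(1) in auto)
  then have "violation a n ?z = - (a m \<bullet> ?z)" unfolding violation_def using \<open>a m \<bullet> ?z < 0\<close> by simp
  then show "violation a n ?z = - (a m \<bullet> x) / norm x" using mz by simp
  have "\<bar>a m \<bullet> x\<bar> \<le> norm (a m) * norm x" by (rule Cauchy_Schwarz_ineq2)
  then show "- (a m \<bullet> x) \<le> norm x" using unit m(1) by simp
qed

lemma bnd_real:
  fixes d al v :: real
  assumes d: "d > 0" and al: "al < 0" "- al \<le> d" and v: "v = - al / d"
  shows "sqrt ((d\<^sup>2 - al\<^sup>2) / (1 - 2 * al + d\<^sup>2)) = sqrt ((1 - v\<^sup>2) / (1 + d\<^sup>2 + 2 * d * v)) * d"
    and "sqrt ((1 - v\<^sup>2) / (1 + d\<^sup>2 + 2 * d * v)) * d < d"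
proof -
  have vd: "v * d = - al" using d v by simp
  have den: "1 + d\<^sup>2 + 2 * d * v = 1 - 2 * al + d\<^sup>2" using vd by (simp add: algebra_simps)
  have num: "(1 - v\<^sup>2) * d\<^sup>2 = d\<^sup>2 - al\<^sup>2" using vd by (simp add: algebra_simps power2_eq_square)
  have "sqrt ((1 - v\<^sup>2) / (1 + d\<^sup>2 + 2 * d * v)) * d = sqrt ((1 - v\<^sup>2) / (1 + d\<^sup>2 + 2 * d * v) * d\<^sup>2)"
    using d by (simp only: real_sqrt_mult real_sqrt_abs abs_of_pos)
  also have "(1 - v\<^sup>2) / (1 + d\<^sup>2 + 2 * d * v) * d\<^sup>2 = (d\<^sup>2 - al\<^sup>2) / (1 - 2 * al + d\<^sup>2)"
    using num den by (simp add: field_simps)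
  finally show "sqrt ((d\<^sup>2 - al\<^sup>2) / (1 - 2 * al + d\<^sup>2)) = sqrt ((1 - v\<^sup>2) / (1 + d\<^sup>2 + 2 * d * v)) * d" by simp
  have vpos: "v > 0" using v d al by (simp add: divide_neg_pos)
  have dpos: "1 + d\<^sup>2 + 2 * d * v > 0" using vpos d by (simp add: add_pos_nonneg)
  have "1 - v\<^sup>2 < 1 + d\<^sup>2 + 2 * d * v" using vpos d by (smt (verit) mult_pos_pos zero_less_power2)
  then have "(1 - v\<^sup>2) / (1 + d\<^sup>2 + 2 * d * v) < 1" using dpos by simp
  then have "sqrt ((1 - v\<^sup>2) / (1 + d\<^sup>2 + 2 * d * v)) < 1" by simp
  then show "sqrt ((1 - v\<^sup>2) / (1 + d\<^sup>2 + 2 * d * v)) * d < d" using d by simp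
qed


definition bnd :: "(nat \<Rightarrow> 'a::euclidean_space) \<Rightarrow> nat \<Rightarrow> 'a \<Rightarrow> real" where
  "bnd a n x = sqrt ((1 - (violation a n (x /\<^sub>R norm x))\<^sup>2) /
      (1 + (norm x)\<^sup>2 + 2 * norm x * violation a n (x /\<^sub>R norm x))) * norm x"

definition inv2 :: "(nat \<Rightarrow> 'a::euclidean_space) \<Rightarrow> nat \<Rightarrow> 'a \<Rightarrow> 'a set \<Rightarrow> bool" where
  "inv2 a n x Q \<longleftrightarrow> finite Q \<and> Q \<noteq> {} \<and> Q \<subseteq> a ` {..<n} \<and> \<not> affine_dependent Q \<and>
     x = closest_point (affine hull Q) 0 \<and> x \<in> convex hull Q \<and> x \<noteq> 0"

definition inv4 :: "(nat \<Rightarrow> 'a::euclidean_space) \<Rightarrow> nat \<Rightarrow> 'a \<Rightarrow> 'a set \<Rightarrow> 'a set \<Rightarrow> 'a \<Rightarrow> 'a \<Rightarrow> bool" where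
  "inv4 a n x Q P am y \<longleftrightarrow> inv2 a n x Q \<and> am \<in> a ` {..<n} \<and> am \<notin> Q \<and> P \<subseteq> Q \<and>
     \<not> affine_dependent (insert am Q) \<and> \<not> pos_spanning (insert am Q) \<and>
     y \<in> convex hull (insert am P) \<and> norm y \<le> bnd a n x \<and> bnd a n x < norm x"

fun inv :: "(nat \<Rightarrow> 'a::euclidean_space) \<Rightarrow> nat \<Rightarrow> 'a alg_state \<Rightarrow> bool" where
  "inv a n (At2 x Q) = inv2 a n x Q"
| "inv a n (At4 x Q P am y) = inv4 a n x Q P am y"
| "inv a n (StopFeasible z) = (norm z = 1 \<and> (\<forall>i<n. 0 \<le> a i \<bullet> z))"
| "inv a n (StopSpanning P) = (P \<subseteq> a ` {..<n} \<and> pos_spanning P)"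

lemma seg_norm:
  fixes p q z :: "'a::real_normed_vector"
  assumes "z \<in> closed_segment p q" "norm q \<le> norm p"
  shows "norm z \<le> norm p"
proof -
  obtain u where u: "0 \<le> u" "u \<le> 1" "z = (1 - u) *\<^sub>R p + u *\<^sub>R q" using assms(1) unfolding in_segment by auto
  have "norm z \<le> norm ((1 - u) *\<^sub>R p) + norm (u *\<^sub>R q)" unfolding u(3) by (rule norm_triangle_ineq)
  also have "\<dots> = (1 - u) * norm p + u * norm q" using u by simp
  also have "\<dots> \<le> (1 - u) * norm p + u * norm p" using u assms(2) by (simp add: mult_left_mono)
  finally show ?thesis by (simp add: algebra_simps)
qed

lemma inv_init:
  assumes unit: "\<forall>i<n. norm (a i) = 1" and "alg_init a n s"
  shows "inv a n s"
proof -
  obtain j where j: "j < n" "s = At2 (a j) {a j}" using assms(2) unfolding alg_init_def by auto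
  have "a j \<noteq> 0" using unit j by auto
  moreover have "closest_point {a j} 0 = a j" using closest_point_in_set[of "{a j}" 0] by simp
  ultimately show ?thesis using j by (auto simp: inv2_def)
qed

lemma inv_step3c:
  fixes a :: "nat \<Rightarrow> 'a::euclidean_space"
  assumes unit: "\<forall>i<n. norm (a i) = 1" and iv: "inv2 a n x Q"
    and nf: "\<not> feasible_pt a n (x /\<^sub>R norm x)" and mv: "most_violated a n (x /\<^sub>R norm x) m"
    and nps: "\<not> pos_spanning (insert (a m) Q)"
    and y: "y = closest_point (affine hull {x, a m}) 0"
  shows "inv4 a n x Q Q (a m) y"
proof -
  have I: "finite Q" "Q \<noteq> {}" "Q \<subseteq> a ` {..<n}" "\<not> affine_dependent Q"
     "x = closest_point (affine hull Q) 0" "x \<in> convex hull Q" "x \<noteq> 0" using iv unfolding inv2_def by auto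
  note V = viol[OF unit I(7) nf mv]
  have nx: "norm x > 0" using I(7) by simp
  have am1: "norm (a m) = 1" using unit V(4) by simp
  have xx: "x \<bullet> x > 0" using I(7) by simp
  have notaff: "a m \<notin> affine hull Q"
  proof
    assume "a m \<in> affine hull Q"
    then have "a m \<bullet> x = x \<bullet> x" using cp_props(2)[OF I(2)] I(5) by metis
    then show False using V(1) xx by simp
  qed
  then have amQ: "a m \<notin> Q" by (meson hull_inc)
  have indep: "\<not> affine_dependent (insert (a m) Q)" by (rule affine_independent_insert[OF I(4) notaff])
  note L = line_cp[OF am1 V(1)]
  have "y \<in> closed_segment x (a m)" using L(1) y by simp
  moreover have "closed_segment x (a m) \<subseteq> convex hull (insert (a m) Q)"
    by (rule closed_segment_subset) (use I(6) hull_mono[of Q "insert (a m) Q"] in \<open>auto intro: hull_inc\<close>)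
  ultimately have yin: "y \<in> convex hull (insert (a m) Q)" by blast
  have xam: "x \<bullet> a m = a m \<bullet> x" by (simp add: inner_commute)
  have xxd: "x \<bullet> x = (norm x)\<^sup>2" by (simp add: power2_norm_eq_inner)
  note B = bnd_real[OF nx, of "x \<bullet> a m" "violation a n (x /\<^sub>R norm x)"]
  have B1: "sqrt (((norm x)\<^sup>2 - (x \<bullet> a m)\<^sup>2) / (1 - 2 * (x \<bullet> a m) + (norm x)\<^sup>2)) = bnd a n x"
    using B(1) V xam unfolding bnd_def by simp
  have B2: "bnd a n x < norm x" using B(2) V xam unfolding bnd_def by simp
  have "norm y = sqrt ((norm y)\<^sup>2)" by simp
  also have "(norm y)\<^sup>2 = ((norm x)\<^sup>2 - (x \<bullet> a m)\<^sup>2) / (1 - 2 * (x \<bullet> a m) + (norm x)\<^sup>2)"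
    using L(2) y xxd by simp
  finally have "norm y = bnd a n x" using B1 by simp
  then show ?thesis unfolding inv4_def using iv V(4) amQ indep nps yin B2 by auto
qed

lemma inv_step5:
  fixes a :: "nat \<Rightarrow> 'a::euclidean_space"
  assumes unit: "\<forall>i<n. norm (a i) = 1" and iv: "inv4 a n x Q P am y"
    and ind: "\<not> affine_dependent (insert am P)"
    and C: "C = touching_center (insert am P)" and Cin: "C \<in> convex hull (insert am P)"
  shows "inv2 a n C (insert am P)"
proof -
  have I: "finite Q" "Q \<subseteq> a ` {..<n}" "am \<in> a ` {..<n}" "P \<subseteq> Q"
    "\<not> affine_dependent (insert am Q)" "\<not> pos_spanning (insert am Q)"
    using iv unfolding inv4_def inv2_def by auto
  have fin: "finite (insert am P)" using I(1,4) finite_subset by blast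
  have sub: "insert am P \<subseteq> a ` {..<n}" using I by auto
  have un: "\<forall>q\<in>insert am P. norm q = 1" using sub unit by auto
  have Ceq: "C = closest_point (affine hull (insert am P)) 0" using touching_eq[OF fin _ un] C by simp
  have "C \<noteq> 0"
  proof
    assume "C = 0"
    then have "0 \<in> convex hull (insert am Q)" using Cin hull_mono[of "insert am P" "insert am Q"] I(4) by blast
    then have "pos_spanning (insert am Q)" using I(1,5) unfolding pos_spanning_def by simp
    then show False using I(6) by simp
  qed
  then show ?thesis unfolding inv2_def using fin sub ind Ceq Cin by auto
qed

lemma inv_step6:
  fixes a :: "nat \<Rightarrow> 'a::euclidean_space"
  assumes unit: "\<forall>i<n. norm (a i) = 1" and iv: "inv4 a n x Q P am y"
    and ind: "\<not> affine_dependent (insert am P)"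
    and C: "C = touching_center (insert am P)"
    and y': "y' \<in> closed_segment y C" and F: "F facet_of (convex hull (insert am P))" "y' \<in> F"
    and aj: "aj \<in> P" "aj \<notin> F"
  shows "inv4 a n x Q (P - {aj}) am y'"
proof -
  have I: "finite Q" "Q \<subseteq> a ` {..<n}" "am \<in> a ` {..<n}" "P \<subseteq> Q" "am \<notin> Q"
    "y \<in> convex hull (insert am P)" "norm y \<le> bnd a n x"
    using iv unfolding inv4_def inv2_def by auto
  have fin: "finite (insert am P)" using I(1,4) finite_subset by blast
  have sub: "insert am P \<subseteq> a ` {..<n}" using I by auto
  have un: "\<forall>q\<in>insert am P. norm q = 1" using sub unit by auto
  have Ceq: "C = closest_point (affine hull (insert am P)) 0" using touching_eq[OF fin _ un] C by simp
  have yaff: "y \<in> affine hull (insert am P)" using I(6) convex_hull_subset_affine_hull by blast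
  have "norm C \<le> norm y" unfolding Ceq by (rule cp_props(3)[OF _ yaff]) simp
  then have ny': "norm y' \<le> norm y" by (rule seg_norm[OF y'])
  have "\<exists>u. u \<in> insert am P \<and> F = convex hull (insert am P - {u})"
    using F(1) facet_of_convex_hull_affine_independent[OF ind] by simp
  then obtain u where u: "u \<in> insert am P" "F = convex hull (insert am P - {u})" by blast
  have "u = aj"
  proof (rule ccontr)
    assume "u \<noteq> aj"
    then have "aj \<in> insert am P - {u}" using aj by auto
    then have "aj \<in> F" unfolding u(2) by (rule hull_inc)
    then show False using aj by simp
  qed
  moreover have "am \<noteq> aj" using aj I(4,5) by auto
  ultimately have "insert am P - {u} = insert am (P - {aj})" by blast
  then have "F = convex hull (insert am (P - {aj}))" using u(2) by simp
  then have "y' \<in> convex hull (insert am (P - {aj}))" using F(2) by simp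
  moreover have "norm y' \<le> bnd a n x" using ny' I(7) by linarith
  moreover have "P - {aj} \<subseteq> Q" using I(4) by blast
  ultimately show ?thesis using iv unfolding inv4_def by (simp only: simp_thms) 
qed


lemma prog2:
  fixes a :: "nat \<Rightarrow> 'a::euclidean_space"
  assumes n: "0 < n"
  shows "\<exists>s'. alg_step a n (At2 x Q) s'"
proof (cases "feasible_pt a n (x /\<^sub>R norm x)")
  case True
  then show ?thesis by (blast intro: alg_step.step2_stop)
next
  case False
  let ?z = "x /\<^sub>R norm x"
  have "Min ((\<lambda>j. a j \<bullet> ?z) ` {..<n}) \<in> (\<lambda>j. a j \<bullet> ?z) ` {..<n}"
    by (rule Min_in) (use n in auto)
  then obtain m where "m < n" "a m \<bullet> ?z = Min ((\<lambda>j. a j \<bullet> ?z) ` {..<n})" by auto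
  then have mv: "most_violated a n ?z m" unfolding most_violated_def by simp
  show ?thesis
  proof (cases "pos_spanning (insert (a m) Q)")
    case True
    then show ?thesis using alg_step.step3_stop[OF False mv] by blast
  next
    case F2: False
    show ?thesis using alg_step.step3_continue[OF False mv F2 refl] by blast
  qed
qed

lemma prog4:
  fixes a :: "nat \<Rightarrow> 'a::euclidean_space"
  assumes unit: "\<forall>i<n. norm (a i) = 1" and iv: "inv4 a n x Q P am y"
  shows "\<exists>s'. alg_step a n (At4 x Q P am y) s'"
proof -
  have I: "finite Q" "Q \<subseteq> a ` {..<n}" "am \<in> a ` {..<n}" "P \<subseteq> Q" "am \<notin> Q"
    "y \<in> convex hull (insert am P)" "norm y \<le> bnd a n x" "bnd a n x < norm x"
    "\<not> affine_dependent (insert am Q)" "Q \<noteq> {}" "x = closest_point (affine hull Q) 0"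
    using iv unfolding inv4_def inv2_def by auto
  define S where "S = insert am P"
  have finP: "finite P" using I(1,4) finite_subset by blast
  have fin: "finite S" using finP S_def by simp
  have sub: "S \<subseteq> a ` {..<n}" using I S_def by auto
  have un: "\<forall>q\<in>S. norm q = 1" using sub unit by auto
  have ind: "\<not> affine_dependent S"
    using I(9) affine_dependent_subset[of S "insert am Q"] I(4) S_def by blast
  define C where "C = touching_center S"
  have Ceq: "C = closest_point (affine hull S) 0" using touching_eq[OF fin _ un] C_def S_def by simp
  have Caff: "C \<in> affine hull S" unfolding Ceq by (rule cp_props(1)) (simp add: S_def)
  have yK: "y \<in> convex hull S" using I(6) S_def by simp
  have yaff: "y \<in> affine hull S" using yK convex_hull_subset_affine_hull by blast
  have nC: "norm C \<le> norm y" unfolding Ceq by (rule cp_props(3)[OF _ yaff]) (simp add: S_def)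
  show ?thesis
  proof (cases "C \<in> convex hull S")
    case True
    have "alg_step a n (At4 x Q P am y) (At2 C (insert am P))"
      by (rule alg_step.step5) (use finP ind C_def True S_def in auto)
    then show ?thesis by blast
  next
    case Cout: False
    let ?K = "convex hull S"
    have cK: "compact ?K" using fin by (simp add: compact_convex_hull finite_imp_compact)
    have clK: "closure ?K = ?K" using cK by (simp add: compact_imp_closed)
    obtain y' where y'seg: "y' \<in> closed_segment y C" and y'fr: "y' \<in> rel_frontier ?K"
    proof (cases "y \<in> rel_interior ?K")
      case False
      then have "y \<in> rel_frontier ?K" using yK clK unfolding rel_frontier_def by simp
      then show ?thesis using that[of y] by simp
    next
      case True
      have l: "y + (C - y) \<in> affine hull ?K" using Caff by (simp add: affine_hull_convex_hull)
      have l0: "C - y \<noteq> 0" using Cout yK by auto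
      obtain d where d: "0 < d" "y + d *\<^sub>R (C - y) \<in> rel_frontier ?K"
        "\<And>e. \<lbrakk>0 \<le> e; e < d\<rbrakk> \<Longrightarrow> y + e *\<^sub>R (C - y) \<in> rel_interior ?K"
        using ray_to_rel_frontier[OF compact_imp_bounded[OF cK] True l l0] by blast
      have "d \<le> 1"
      proof (rule ccontr)
        assume "\<not> d \<le> 1"
        then have "y + 1 *\<^sub>R (C - y) \<in> rel_interior ?K" using d(3)[of 1] by simp
        then have "C \<in> ?K" using rel_interior_subset by fastforce
        then show False using Cout by simp
      qed
      have "y + d *\<^sub>R (C - y) = (1 - d) *\<^sub>R y + d *\<^sub>R C" by (simp add: algebra_simps)
      then have "y + d *\<^sub>R (C - y) \<in> closed_segment y C"
        unfolding in_segment using d(1) \<open>d \<le> 1\<close> by (intro conjI exI[of _ d]) auto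
      then show ?thesis using that d(2) by blast
    qed
    have ny': "norm y' \<le> norm y" using seg_norm[OF y'seg nC] .
    have "rel_frontier ?K = \<Union> {F. F facet_of ?K}"
      by (rule rel_frontier_of_polyhedron[OF polyhedron_convex_hull[OF fin]])
    then obtain F where F: "F facet_of ?K" "y' \<in> F" using y'fr by blast
    have "\<exists>u. u \<in> S \<and> F = convex hull (S - {u})"
      using F(1) facet_of_convex_hull_affine_independent[OF ind] by simp
    then obtain u where u: "u \<in> S" "F = convex hull (S - {u})" by blast
    have uam: "u \<noteq> am"
    proof
      assume "u = am"
      then have "S - {u} \<subseteq> Q" using I(4) S_def by blast
      then have "F \<subseteq> convex hull Q" using u(2) hull_mono by blast
      then have "y' \<in> affine hull Q" using F(2) convex_hull_subset_affine_hull by blast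
      then have "norm x \<le> norm y'" using cp_props(3)[OF I(10)] I(11) by simp
      then show False using ny' I(7,8) by linarith
    qed
    then have uP: "u \<in> P" using u(1) S_def by simp
    have "u \<notin> affine hull (S - {u})" using ind u(1) unfolding affine_dependent_def by blast
    then have uF: "u \<notin> F" using u(2) convex_hull_subset_affine_hull by blast
    have "alg_step a n (At4 x Q P am y) (At4 x Q (P - {u}) am y')"
      by (rule alg_step.step6[where C=C and F=F]) (use finP ind C_def Cout y'seg y'fr F uP uF S_def in auto)
    then show ?thesis by blast
  qed
qed


lemma inv_step:
  fixes a :: "nat \<Rightarrow> 'a::euclidean_space"
  assumes unit: "\<forall>i<n. norm (a i) = 1" and st: "alg_step a n s s'" and iv: "inv a n s"
  shows "inv a n s'"
  using st
proof (cases rule: alg_step.cases)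
  case (step2_stop x Q)
  then show ?thesis using iv by (auto simp: inv2_def feasible_pt_def)
next
  case (step3_stop x m Q)
  then show ?thesis using iv by (auto simp: inv2_def most_violated_def)
next
  case (step3_continue x m Q y)
  then show ?thesis using iv inv_step3c[OF unit] by auto
next
  case (step5 P am C x Q y)
  then show ?thesis using iv inv_step5[OF unit] by auto
next
  case (step6 P am C y' y F aj x Q)
  then show ?thesis using iv inv_step6[OF unit] by auto
qed

lemma reach_inv:
  fixes a :: "nat \<Rightarrow> 'a::euclidean_space"
  assumes unit: "\<forall>i<n. norm (a i) = 1" and r: "alg_reachable a n s"
  shows "inv a n s"
proof -
  obtain s0 where s0: "alg_init a n s0" "(alg_step a n)\<^sup>*\<^sup>* s0 s" using r unfolding alg_reachable_def by blast
  show ?thesis using s0(2)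
  proof (induction rule: rtranclp_induct)
    case base
    then show ?case using inv_init[OF unit s0(1)] .
  next
    case (step s1 s2)
    then show ?case using inv_step[OF unit] by blast
  qed
qed

definition Vs :: "(nat \<Rightarrow> 'a::euclidean_space) \<Rightarrow> nat \<Rightarrow> real set" where
  "Vs a n = (\<lambda>R. norm (closest_point (affine hull R) 0)) ` Pow (a ` {..<n})"

definition rk :: "(nat \<Rightarrow> 'a::euclidean_space) \<Rightarrow> nat \<Rightarrow> 'a \<Rightarrow> nat" where
  "rk a n x = card {w \<in> Vs a n. w < norm x}"

fun mu :: "(nat \<Rightarrow> 'a::euclidean_space) \<Rightarrow> nat \<Rightarrow> 'a alg_state \<Rightarrow> nat" where
  "mu a n (At2 x Q) = (n + 3) * rk a n x + card Q + 1"
| "mu a n (At4 x Q P am y) = (n + 3) * rk a n x + card P"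
| "mu a n (StopFeasible z) = 0"
| "mu a n (StopSpanning P) = 0"

lemma mu_step5:
  fixes a :: "nat \<Rightarrow> 'a::euclidean_space"
  assumes unit: "\<forall>i<n. norm (a i) = 1" and iv: "inv4 a n x Q P am y"
    and ind: "\<not> affine_dependent (insert am P)"
    and C: "C = touching_center (insert am P)" and Cin: "C \<in> convex hull (insert am P)"
  shows "(n + 3) * rk a n C + card (insert am P) + 1 < (n + 3) * rk a n x + card P"
proof -
  have I2: "inv2 a n C (insert am P)" by (rule inv_step5[OF unit iv ind C Cin])
  have I: "finite Q" "Q \<subseteq> a ` {..<n}" "am \<in> a ` {..<n}" "P \<subseteq> Q"
    "y \<in> convex hull (insert am P)" "norm y \<le> bnd a n x" "bnd a n x < norm x"
    "x = closest_point (affine hull Q) 0"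
    using iv unfolding inv4_def inv2_def by auto
  have Ceq: "C = closest_point (affine hull (insert am P)) 0" and sub: "insert am P \<subseteq> a ` {..<n}"
    using I2 unfolding inv2_def by auto
  have yaff: "y \<in> affine hull (insert am P)" using I(5) convex_hull_subset_affine_hull by blast
  have "norm C \<le> norm y" unfolding Ceq by (rule cp_props(3)[OF _ yaff]) simp
  then have lt: "norm C < norm x" using I(6,7) by linarith
  have CV: "norm C \<in> Vs a n" unfolding Vs_def using Ceq sub by blast
  have xV: "norm x \<in> Vs a n" unfolding Vs_def using I(8) I(2) by blast
  have finV: "finite (Vs a n)" unfolding Vs_def by simp
  have "{w \<in> Vs a n. w < norm C} \<subset> {w \<in> Vs a n. w < norm x}" using lt CV by auto
  then have rlt: "rk a n C < rk a n x" unfolding rk_def by (rule psubset_card_mono[rotated]) (use finV in simp)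
  have "card (insert am P) \<le> card (a ` {..<n})" by (rule card_mono) (use sub in auto)
  also have "\<dots> \<le> n" using card_image_le[of "{..<n}" a] by simp
  finally have cS: "card (insert am P) \<le> n" .
  have "(n + 3) * (rk a n C + 1) \<le> (n + 3) * rk a n x" using rlt by (intro mult_le_mono2) simp
  then show ?thesis using cS by (simp add: algebra_simps)
qed

lemma mu_decr:
  fixes a :: "nat \<Rightarrow> 'a::euclidean_space"
  assumes unit: "\<forall>i<n. norm (a i) = 1" and st: "alg_step a n s s'" and iv: "inv a n s"
  shows "mu a n s' < mu a n s"
  using st
proof (cases rule: alg_step.cases)
  case (step5 P am C x Q y)
  then show ?thesis using iv mu_step5[OF unit] by auto
next
  case (step6 P am C y' y F aj x Q)
  then show ?thesis using card_Diff1_less[of P aj] by simp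
qed auto


theorem lemma2p10:
  fixes a :: "nat \<Rightarrow> 'a::euclidean_space" and n :: nat
  assumes "0 < n" and "\<forall>i<n. norm (a i) = 1"
  shows "\<not> (\<exists>f. alg_init a n (f 0) \<and> (\<forall>k. alg_step a n (f k) (f (Suc k))))
    \<and> (\<forall>s. alg_reachable a n s \<longrightarrow>
          (case s of
             StopFeasible z \<Rightarrow> norm z = 1 \<and> (\<forall>i<n. 0 \<le> a i \<bullet> z)
           | StopSpanning P \<Rightarrow> P \<subseteq> a ` {..<n} \<and> pos_spanning P
           | _ \<Rightarrow> (\<exists>s'. alg_step a n s s')))
    \<and> (\<forall>x Q P am y x' Q'. alg_reachable a n (At4 x Q P am y) \<and>
          alg_step a n (At4 x Q P am y) (At2 x' Q') \<longrightarrow>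
          defect Q' \<le> sqrt ((1 - (violation a n (x /\<^sub>R norm x))\<^sup>2) /
                  (1 + (defect Q)\<^sup>2 + 2 * defect Q * violation a n (x /\<^sub>R norm x))) * defect Q)"
proof (intro conjI allI impI)
  show "\<not> (\<exists>f. alg_init a n (f 0) \<and> (\<forall>k. alg_step a n (f k) (f (Suc k))))"
  proof
    assume "\<exists>f. alg_init a n (f 0) \<and> (\<forall>k. alg_step a n (f k) (f (Suc k)))"
    then obtain f where f0: "alg_init a n (f 0)" and fs: "\<And>k. alg_step a n (f k) (f (Suc k))" by blast
    have ivk: "inv a n (f k)" for k
    proof (induction k)
      case 0
      then show ?case using inv_init[OF assms(2) f0] .
    next
      case (Suc k)
      then show ?case using inv_step[OF assms(2) fs] by blast
    qed
    have dec: "mu a n (f k) + k \<le> mu a n (f 0)" for k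
    proof (induction k)
      case 0
      then show ?case by simp
    next
      case (Suc k)
      have "mu a n (f (Suc k)) < mu a n (f k)" by (rule mu_decr[OF assms(2) fs ivk])
      then show ?case using Suc by simp
    qed
    show False using dec[of "Suc (mu a n (f 0))"] by simp
  qed
next
  fix s assume r: "alg_reachable a n s"
  have iv: "inv a n s" by (rule reach_inv[OF assms(2) r])
  show "case s of
             StopFeasible z \<Rightarrow> norm z = 1 \<and> (\<forall>i<n. 0 \<le> a i \<bullet> z)
           | StopSpanning P \<Rightarrow> P \<subseteq> a ` {..<n} \<and> pos_spanning P
           | _ \<Rightarrow> (\<exists>s'. alg_step a n s s')"
  proof (cases s)
    case (At2 x Q)
    then show ?thesis using prog2[OF assms(1)] by simp
  next
    case (At4 x Q P am y)
    then show ?thesis using prog4[OF assms(2)] iv by simp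
  qed (use iv in auto)
next
  fix x Q P am y x' Q'
  assume h: "alg_reachable a n (At4 x Q P am y) \<and> alg_step a n (At4 x Q P am y) (At2 x' Q')"
  have iv: "inv4 a n x Q P am y" using reach_inv[OF assms(2)] h by fastforce
  have I: "finite Q" "Q \<subseteq> a ` {..<n}" "am \<in> a ` {..<n}" "P \<subseteq> Q"
    "y \<in> convex hull (insert am P)" "norm y \<le> bnd a n x"
    "x = closest_point (affine hull Q) 0"
    using iv unfolding inv4_def inv2_def by auto
  have dQ: "defect Q = norm x" unfolding defect_def proj_origin_def using I(7) by simp
  from h have st: "alg_step a n (At4 x Q P am y) (At2 x' Q')" by simp
  then have "x' = touching_center (insert am P) \<and> Q' = insert am P \<and> \<not> affine_dependent (insert am P)
      \<and> x' \<in> convex hull (insert am P)"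
    by (cases rule: alg_step.cases) auto
  then have X: "x' = touching_center (insert am P)" "Q' = insert am P" "\<not> affine_dependent (insert am P)"
    "x' \<in> convex hull (insert am P)" by auto
  have I2: "inv2 a n x' (insert am P)" by (rule inv_step5[OF assms(2) iv X(3) X(1) X(4)])
  then have Ceq: "x' = closest_point (affine hull (insert am P)) 0" unfolding inv2_def by auto
  have dQ': "defect Q' = norm x'" unfolding defect_def proj_origin_def using Ceq X(2) by simp
  have yaff: "y \<in> affine hull (insert am P)" using I(5) convex_hull_subset_affine_hull by blast
  have "norm x' \<le> norm y" unfolding Ceq by (rule cp_props(3)[OF _ yaff]) simp
  then have "defect Q' \<le> bnd a n x" using I(6) dQ' by linarith
  then show "defect Q' \<le> sqrt ((1 - (violation a n (x /\<^sub>R norm x))\<^sup>2) /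
                  (1 + (defect Q)\<^sup>2 + 2 * defect Q * violation a n (x /\<^sub>R norm x))) * defect Q"
    unfolding dQ bnd_def .
qed

end
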